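(* Let $F$ be the elementary cellular automaton with rule number 32. For every nonempty finite word $u\in\{0,1\}^*$, the deterministic communication complexity of $\textsc{SInv}_{F,u}$ restricted to inputs of length $n$ is bounded by a constant independent of $n$.
   Context: An elementary cellular automaton (ECA) with rule number $N\in\{0,\dots,255\}$ is the map $F:\{0,1\}^{\mathbb Z}\to\{0,1\}^{\mathbb Z}$ given by $F(x)_i=f(x_{i-1},x_i,x_{i+1})$. Here the local rule $f:\{0,1\}^3\to\{0,1\}$ is determined by $N=\sum_{a,b,c\in\{0,1\}}2^{4a+2b+c}f(a,b,c)$. For a nonempty finite word $u$, $p_u\in\{0,1\}^{\mathbb Z}$ is defined by $(p_u)_i=u_{i\bmod |u|}$. For a finite word $x$, $p_u[x]$ is the configuration equal to $x$ on positions $0,\dots,|x|-1$ and to $p_u$ elsewhere. $\textsc{SInv}_{F,u}$ is the decision problem: on input a finite word $x$, decide whether there is an integer $w$ such that for all $t\ge0$ the set of positions where $F^t(p_u)$ and $F^t(p_u[x])$ differ is contained in an interval of length $w$. For each $n$, it is regarded as a function $\{0,1\}^n\to\{0,1\}$. For a function $g:X\times Y\to Z$, $D(g)$ is the minimal depth of a deterministic two-party protocol computing $g$. In such a protocol, Alice knows $x$ and Bob knows $y$. The protocol is a binary tree: each internal node is labelled by a function of Alice's input only or of Bob's input only, with values in $\{\text{left},\text{right}\}$, and each leaf is labelled by an output value. For $g:\{0,1\}^m\to Z$, set $D(g)=\max_{0\le i<m}D(g_i)$, where $g_i:\{0,1\}^i\times\{0,1\}^{m-i}\to Z$ is $g_i(x,y)=g(xy)$.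 *)

theory Defs
  imports Main
begin

text \<open>Configurations are maps int => bool (bool encodes {0,1}); words are bool lists.\<close>

type_synonym config = "int \<Rightarrow> bool"

definition bval :: "bool \<Rightarrow> nat" where "bval b = (if b then 1 else 0)"

text \<open>Local rule of ECA number N: f(a,b,c) is bit (4a+2b+c) of N.\<close>
definition eca_local :: "nat \<Rightarrow> bool \<Rightarrow> bool \<Rightarrow> bool \<Rightarrow> bool" where
  "eca_local N a b c = odd (N div 2 ^ (4 * bval a + 2 * bval b + bval c))"

definition eca :: "nat \<Rightarrow> config \<Rightarrow> config" where
  "eca N x = (\<lambda>i. eca_local N (x (i - 1)) (x i) (x (i + 1)))"

definition periodic :: "bool list \<Rightarrow> config" where
  "periodic u = (\<lambda>i. u ! nat (i mod int (length u)))"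

definition patch :: "bool list \<Rightarrow> bool list \<Rightarrow> config" where
  "patch u x = (\<lambda>i. if 0 \<le> i \<and> i < int (length x) then x ! nat i else periodic u i)"

definition SInv :: "nat \<Rightarrow> bool list \<Rightarrow> bool list \<Rightarrow> bool" where
  "SInv N u x = (\<exists>w::nat. \<forall>t::nat. \<exists>a::int.
      {i. (eca N ^^ t) (periodic u) i \<noteq> (eca N ^^ t) (patch u x) i} \<subseteq> {a..<a + int w})"

datatype ('x, 'y, 'z) protocol =
    Leaf 'z
  | AliceNode "'x \<Rightarrow> bool" "('x, 'y, 'z) protocol" "('x, 'y, 'z) protocol"
  | BobNode "'y \<Rightarrow> bool" "('x, 'y, 'z) protocol" "('x, 'y, 'z) protocol"

fun run_protocol :: "('x, 'y, 'z) protocol \<Rightarrow> 'x \<Rightarrow> 'y \<Rightarrow> 'z" where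
  "run_protocol (Leaf z) x y = z"
| "run_protocol (AliceNode f l r) x y = (if f x then run_protocol l x y else run_protocol r x y)"
| "run_protocol (BobNode g l r) x y = (if g y then run_protocol l x y else run_protocol r x y)"

fun depth :: "('x, 'y, 'z) protocol \<Rightarrow> nat" where
  "depth (Leaf z) = 0"
| "depth (AliceNode f l r) = Suc (max (depth l) (depth r))"
| "depth (BobNode g l r) = Suc (max (depth l) (depth r))"

text \<open>D(g_i) for g : {0,1}^m -> Z split at position i (Alice gets the first i bits).\<close>
definition cc_split :: "(bool list \<Rightarrow> 'z) \<Rightarrow> nat \<Rightarrow> nat \<Rightarrow> nat" where
  "cc_split g m i = (LEAST d. \<exists>p :: (bool list, bool list, 'z) protocol.
      depth p = d \<and> (\<forall>x y. length x = i \<longrightarrow> length y = m - i \<longrightarrow> run_protocol p x y = g (x @ y)))"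

text \<open>D(g) = max over 0 <= i < m of D(g_i) (0 for m = 0, empty maximum).\<close>
definition cc :: "(bool list \<Rightarrow> 'z) \<Rightarrow> nat \<Rightarrow> nat" where
  "cc g m = (if m = 0 then 0 else Max ((cc_split g m) ` {..<m}))"

end

theory Submission
  imports Defs
begin

definition W :: "nat \<Rightarrow> config \<Rightarrow> int \<Rightarrow> bool" where
  "W t c i = (\<forall>j::int. - int t \<le> j \<and> j \<le> int t \<longrightarrow> c (i + j) = even (j + int t))"

lemma eca32: "eca 32 c i = (c (i - 1) \<and> \<not> c i \<and> c (i + 1))"
  unfolding eca_def eca_local_def bval_def
  by (cases "c (i - 1)"; cases "c i"; cases "c (i+1)"; simp)

lemma W0: "W 0 c i = c i"
  unfolding W_def by auto

lemma WI: "W t c i \<Longrightarrow> - int t \<le> j \<Longrightarrow> j \<le> int t \<Longrightarrow> c (i + j) = even (j + int t)"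
  unfolding W_def by blast

lemma W_Suc: "W (Suc t) c i = (W t c (i - 1) \<and> \<not> W t c i \<and> W t c (i + 1))"
proof
  assume A: "W (Suc t) c i"
  have 1: "W t c (i - 1)"
    unfolding W_def
  proof (intro allI impI)
    fix j :: int assume j: "- int t \<le> j \<and> j \<le> int t"
    have "c (i + (j - 1)) = even (j - 1 + int (Suc t))" by (rule WI[OF A]) (use j in auto)
    then show "c (i - 1 + j) = even (j + int t)" by (simp add: algebra_simps)
  qed
  have 2: "W t c (i + 1)"
    unfolding W_def
  proof (intro allI impI)
    fix j :: int assume j: "- int t \<le> j \<and> j \<le> int t"
    have "c (i + (j + 1)) = even (j + 1 + int (Suc t))" by (rule WI[OF A]) (use j in auto)
    moreover have "even (j + 1 + int (Suc t)) = even (j + int t)" by simp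
    ultimately show "c (i + 1 + j) = even (j + int t)" by (simp add: algebra_simps)
  qed
  have 3: "\<not> W t c i"
  proof
    assume B: "W t c i"
    have "c (i + - int t) = even (- int t + int t)" by (rule WI[OF B]) auto
    moreover have "c (i + - int t) = even (- int t + int (Suc t))" by (rule WI[OF A]) auto
    ultimately show False by simp
  qed
  show "W t c (i - 1) \<and> \<not> W t c i \<and> W t c (i + 1)" using 1 2 3 by blast
next
  assume B: "W t c (i - 1) \<and> \<not> W t c i \<and> W t c (i + 1)"
  then have B1: "W t c (i - 1)" and B2: "\<not> W t c i" and B3: "W t c (i + 1)" by auto
  show "W (Suc t) c i"
    unfolding W_def
  proof (intro allI impI)
    fix j :: int assume j: "- int (Suc t) \<le> j \<and> j \<le> int (Suc t)"
    show "c (i + j) = even (j + int (Suc t))"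
    proof (cases "j \<le> int t - 1")
      case True
      have "c (i - 1 + (j + 1)) = even (j + 1 + int t)" by (rule WI[OF B1]) (use j True in auto)
      then show ?thesis by (simp add: algebra_simps)
    next
      case F1: False
      show ?thesis
      proof (cases "j \<ge> 1 - int t")
        case True
        have "c (i + 1 + (j - 1)) = even (j - 1 + int t)" by (rule WI[OF B3]) (use j True in auto)
        moreover have "even (j - 1 + int t) = even (j + int (Suc t))" by (cases "even j"; cases "even t") auto
        ultimately show ?thesis by (simp add: algebra_simps)
      next
        case False
        then have "t = 0" "j = 0" using F1 by auto
        then show ?thesis using B2 W0 by simp
      qed
    qed
  qed
qed

lemma iterW: "(eca 32 ^^ t) c i = W t c i"
proof (induction t arbitrary: i)
  case 0 then show ?case by (simp add: W0)
next
  case (Suc t)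
  have "(eca 32 ^^ Suc t) c i = eca 32 ((eca 32 ^^ t) c) i" by simp
  also have "\<dots> = W (Suc t) c i" unfolding eca32 Suc W_Suc by (rule refl)
  finally show ?case .
qed

lemma defectW: "c j = c (j + 1) \<Longrightarrow> i - int t \<le> j \<Longrightarrow> j + 1 \<le> i + int t \<Longrightarrow> \<not> W t c i"
proof
  assume d: "c j = c (j + 1)" and r: "i - int t \<le> j" "j + 1 \<le> i + int t" and w: "W t c i"
  have "c (i + (j - i)) = even (j - i + int t)" by (rule WI[OF w]) (use r in auto)
  moreover have "c (i + (j + 1 - i)) = even (j + 1 - i + int t)" by (rule WI[OF w]) (use r in auto)
  ultimately have "even (j - i + int t) = even (j + 1 - i + int t)" using d by simp
  moreover have "j + 1 - i + int t = (j - i + int t) + 1" by simp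
  ultimately show False by (metis even_plus_one_iff)
qed

lemma W_cong: "(\<And>k. i - int t \<le> k \<Longrightarrow> k \<le> i + int t \<Longrightarrow> c1 k = c2 k) \<Longrightarrow> W t c1 i = W t c2 i"
  unfolding W_def by (smt (verit, best))

lemma periodic_mod: "a mod int (length u) = b mod int (length u) \<Longrightarrow> periodic u a = periodic u b"
  unfolding periodic_def by simp

lemma patch_out: "k < 0 \<or> k \<ge> int (length x) \<Longrightarrow> patch u x k = periodic u k"
  unfolding patch_def by auto

definition alt :: "config \<Rightarrow> bool" where "alt c = (\<forall>i. c (i + 1) \<noteq> c i)"

definition match :: "bool list \<Rightarrow> bool list \<Rightarrow> bool" where
  "match u x = (\<forall>k < length x. x ! k = periodic u (int k))"

lemma caseA:
  assumes "u \<noteq> []" "\<not> alt (periodic u)"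
  shows "SInv 32 u x"
proof -
  define p where "p = periodic u"
  define q where "q = patch u x"
  define L where "L = int (length u)"
  define n where "n = int (length x)"
  have Lpos: "L > 0" using assms(1) unfolding L_def by simp
  obtain j0 where j0: "p (j0 + 1) = p j0" using assms(2) unfolding alt_def p_def by auto
  have defp: "\<exists>j. a \<le> j \<and> j \<le> a + L - 1 \<and> p j = p (j + 1)" for a
  proof -
    define j where "j = a + (j0 - a) mod L"
    have "j mod L = j0 mod L" unfolding j_def by (simp add: mod_add_right_eq)
    then have e1: "p j = p j0" unfolding p_def L_def by (rule periodic_mod)
    have "(j + 1) mod L = (j0 + 1) mod L" using \<open>j mod L = j0 mod L\<close> by (metis mod_add_left_eq)
    then have e2: "p (j + 1) = p (j0 + 1)" unfolding p_def L_def by (rule periodic_mod)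
    have "a \<le> j" "j \<le> a + L - 1" unfolding j_def using Lpos by auto
    then show ?thesis using e1 e2 j0 by auto
  qed
  have qout: "k < 0 \<or> k \<ge> n \<Longrightarrow> q k = p k" for k unfolding q_def p_def n_def by (rule patch_out)
  show ?thesis
    unfolding SInv_def
  proof (intro exI allI)
    fix t :: nat
    show "{i. (eca 32 ^^ t) (periodic u) i \<noteq> (eca 32 ^^ t) (patch u x) i}
          \<subseteq> {-(L+n) ..< -(L+n) + int (nat (3*n + 2*L))}"
    proof
      fix i assume "i \<in> {i. (eca 32 ^^ t) (periodic u) i \<noteq> (eca 32 ^^ t) (patch u x) i}"
      then have ne: "W t p i \<noteq> W t q i" unfolding p_def q_def by (simp add: iterW)
      have r1: "i \<ge> - int t" "i < n + int t"
      proof -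
        { assume "i + int t < 0 \<or> i - int t \<ge> n"
          then have "W t p i = W t q i" by (intro W_cong) (auto intro!: qout[symmetric])
          then have False using ne by simp }
        then show "i \<ge> - int t" "i < n + int t" by force+
      qed
      have "int t < L + n"
      proof (rule ccontr)
        assume "\<not> int t < L + n"
        then have tb: "int t \<ge> L + n" by simp
        have n0: "n \<ge> 0" unfolding n_def by simp
        obtain j where j: "i - int t \<le> j" "j \<le> i - int t + L - 1" "p j = p (j + 1)" using defp by blast
        have np: "\<not> W t p i" by (rule defectW[OF j(3) j(1)]) (use j tb n0 in linarith)
        have nq: "\<not> W t q i"
        proof (cases "i - int t + L \<le> -1")
          case True
          then have "q j = q (j + 1)" using j qout[of j] qout[of "j+1"] by auto
          then show ?thesis by (rule defectW) (use j tb n0 in linarith)+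
        next
          case False
          then have F: "i + int t - L \<ge> n" using tb n0 by linarith
          obtain j' where j': "i + int t - L \<le> j'" "j' \<le> i + int t - L + L - 1" "p j' = p (j' + 1)" using defp by blast
          then have "q j' = q (j' + 1)" using F qout[of j'] qout[of "j'+1"] by auto
          then show ?thesis by (rule defectW) (use j' tb n0 Lpos in linarith)+
        qed
        show False using ne np nq by simp
      qed
      then show "i \<in> {-(L+n) ..< -(L+n) + int (nat (3*n + 2*L))}" using r1 Lpos n_def by auto
    qed
  qed
qed

lemma ivt: "f a \<Longrightarrow> \<not> f (a + int d) \<Longrightarrow> \<exists>j. a \<le> j \<and> j < a + int d \<and> f j \<and> \<not> f (j + 1)"
proof (induction d arbitrary: a)
  case 0 then show ?case by simp
next
  case (Suc d)
  show ?case
  proof (cases "f (a + 1)")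
    case True
    have "\<not> f (a + 1 + int d)" using Suc.prems by (simp add: algebra_simps)
    from Suc.IH[OF True this] obtain j where "a + 1 \<le> j \<and> j < a + 1 + int d \<and> f j \<and> \<not> f (j + 1)" by blast
    then show ?thesis by (intro exI[of _ j]) auto
  next
    case False then show ?thesis using Suc.prems by auto
  qed
qed

lemma alt_val: "alt c \<Longrightarrow> c s \<Longrightarrow> c (s + int m) = even m"
proof (induction m)
  case 0 then show ?case by simp
next
  case (Suc m)
  have "c (s + int m + 1) \<noteq> c (s + int m)" using Suc.prems unfolding alt_def by blast
  then show ?case using Suc by (simp add: algebra_simps)
qed

lemma alt_W: "alt c \<Longrightarrow> c s \<Longrightarrow> W t c (s + int t)"
  unfolding W_def
proof (intro allI impI)
  fix j assume a: "alt c" "c s" and j: "- int t \<le> j \<and> j \<le> int t"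
  have "c (s + int (nat (j + int t))) = even (nat (j + int t))" by (rule alt_val[OF a])
  moreover have "int (nat (j + int t)) = j + int t" using j by simp
  moreover have "even (nat (j + int t)) = even (int (nat (j + int t)))" by (simp only: even_of_nat)
  ultimately have "c (s + (j + int t)) = even (j + int t)" by simp
  moreover have "s + int t + j = s + (j + int t)" by simp
  ultimately show "c (s + int t + j) = even (j + int t)" by metis
qed

lemma caseB:
  assumes "alt (periodic u)" "SInv 32 u x"
  shows "match u x"
proof (rule ccontr)
  assume "\<not> match u x"
  then obtain k0 where k0: "k0 < length x" "x ! k0 \<noteq> periodic u (int k0)" unfolding match_def by auto
  define p where "p = periodic u"
  define q where "q = patch u x"
  have "q (int k0) \<noteq> p (int k0)" using k0 unfolding q_def p_def patch_def by auto
  moreover have "q (-1) = p (-1)" unfolding q_def p_def patch_def by auto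
  ultimately obtain j where jj: "-1 \<le> j" "(\<lambda>k. q k = p k) j" "\<not> (\<lambda>k. q k = p k) (j + 1)"
    using ivt[of "\<lambda>k. q k = p k" "-1" "Suc k0"] by auto
  have altp: "alt p" using assms(1) p_def by simp
  have "p (j + 1) \<noteq> p j" using altp unfolding alt_def by blast
  then have dq: "q j = q (j + 1)" using jj by auto
  obtain w where w: "\<forall>t::nat. \<exists>a::int. {i. (eca 32 ^^ t) p i \<noteq> (eca 32 ^^ t) q i} \<subseteq> {a..<a + int w}"
    using assms(2) unfolding SInv_def p_def q_def by blast
  define t where "t = w + 2"
  obtain a where a: "{i. W t p i \<noteq> W t q i} \<subseteq> {a..<a + int w}" using w[rule_format, of t] by (auto simp: iterW)
  have inD: "i \<in> {i. W t p i \<noteq> W t q i}" if "p (i - int t)" "i - int t \<le> j" "j + 1 \<le> i + int t" for i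
  proof -
    have "W t p (i - int t + int t)" by (rule alt_W[OF altp that(1)])
    moreover have "\<not> W t q i" by (rule defectW[OF dq]) (use that in auto)
    ultimately show ?thesis by simp
  qed
  have alt2: "p s \<or> p (s + 1)" for s using altp unfolding alt_def by metis
  obtain s1 where s1: "p s1" "j - 1 \<le> s1" "s1 \<le> j"
  proof (cases "p (j - 1)")
    case True then show ?thesis using that[of "j - 1"] by simp
  next
    case False then have "p (j - 1 + 1)" using alt2[of "j - 1"] by simp
    then show ?thesis using that[of "j - 1 + 1"] by simp
  qed
  obtain s2 where s2: "p s2" "j + 1 - 2 * int t \<le> s2" "s2 \<le> j + 2 - 2 * int t"
  proof (cases "p (j + 1 - 2 * int t)")
    case True then show ?thesis using that[of "j + 1 - 2 * int t"] by simp
  next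
    case False then have "p (j + 1 - 2 * int t + 1)" using alt2[of "j + 1 - 2 * int t"] by simp
    then show ?thesis using that[of "j + 1 - 2 * int t + 1"] by simp
  qed
  have "s1 + int t \<in> {a..<a + int w}" using a inD[of "s1 + int t"] s1 t_def by auto
  moreover have "s2 + int t \<in> {a..<a + int w}" using a inD[of "s2 + int t"] s2 t_def by auto
  ultimately show False using s1 s2 t_def by auto
qed

lemma match_self: "match u x \<Longrightarrow> SInv 32 u x"
proof -
  assume m: "match u x"
  have "patch u x = periodic u" using m unfolding patch_def match_def
    by (auto simp: fun_eq_iff)
  then show ?thesis unfolding SInv_def by auto
qed

definition moff :: "bool list \<Rightarrow> nat \<Rightarrow> bool list \<Rightarrow> bool" where
  "moff u i y = (\<forall>k < length y. y ! k = periodic u (int i + int k))"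

lemma match_append: "match u (x @ y) = (match u x \<and> moff u (length x) y)"
proof
  assume A: "match u (x @ y)"
  have "match u x" unfolding match_def
  proof (intro allI impI)
    fix k assume "k < length x"
    then show "x ! k = periodic u (int k)" using A unfolding match_def
      by (metis length_append nth_append trans_less_add1)
  qed
  moreover have "moff u (length x) y" unfolding moff_def
  proof (intro allI impI)
    fix k assume "k < length y"
    then have "length x + k < length (x @ y)" by simp
    then have "(x @ y) ! (length x + k) = periodic u (int (length x + k))" using A unfolding match_def by blast
    then show "y ! k = periodic u (int (length x) + int k)" by simp
  qed
  ultimately show "match u x \<and> moff u (length x) y" by blast
next
  assume A: "match u x \<and> moff u (length x) y"
  show "match u (x @ y)" unfolding match_def
  proof (intro allI impI)
    fix k assume k: "k < length (x @ y)"
    show "(x @ y) ! k = periodic u (int k)"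
    proof (cases "k < length x")
      case True then show ?thesis using A unfolding match_def by (simp add: nth_append)
    next
      case False
      then have "k - length x < length y" using k by simp
      then have "y ! (k - length x) = periodic u (int (length x) + int (k - length x))"
        using A unfolding moff_def by blast
      then show ?thesis using False by (simp add: nth_append)
    qed
  qed
qed

definition prot :: "bool list \<Rightarrow> nat \<Rightarrow> (bool list, bool list, bool) protocol" where
  "prot u i = (if alt (periodic u) then AliceNode (match u) (BobNode (moff u i) (Leaf True) (Leaf False)) (Leaf False)
     else Leaf True)"

lemma prot_depth: "depth (prot u i) \<le> 2"
  unfolding prot_def by simp

lemma prot_ok:
  assumes "u \<noteq> []" "length x = i"
  shows "run_protocol (prot u i) x y = SInv 32 u (x @ y)"
proof (cases "alt (periodic u)")
  case True
  have "SInv 32 u (x @ y) = match u (x @ y)" using caseB[OF True] match_self by blast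
  then show ?thesis using True assms by (simp add: prot_def match_append)
next
  case False
  then show ?thesis using caseA[OF assms(1) False] by (simp add: prot_def)
qed

lemma split_le: "u \<noteq> [] \<Longrightarrow> cc_split (SInv 32 u) m i \<le> 2"
proof -
  assume u: "u \<noteq> []"
  have "\<exists>p :: (bool list, bool list, bool) protocol. depth p = depth (prot u i) \<and>
      (\<forall>x y. length x = i \<longrightarrow> length y = m - i \<longrightarrow> run_protocol p x y = SInv 32 u (x @ y))"
    using prot_ok[OF u] by blast
  then have "cc_split (SInv 32 u) m i \<le> depth (prot u i)" unfolding cc_split_def by (rule Least_le)
  then show ?thesis using prot_depth order.trans by blast
qed

theorem mainTheorem10:
  fixes u :: "bool list"
  assumes "u \<noteq> []"
  shows "\<exists>C::nat. \<forall>n::nat. cc (SInv 32 u) n \<le> C"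
proof (intro exI allI)
  fix n
  show "cc (SInv 32 u) n \<le> 2"
  proof (cases "n = 0")
    case True then show ?thesis unfolding cc_def by simp
  next
    case False
    have "Max (cc_split (SInv 32 u) n ` {..<n}) \<le> 2"
      using split_le[OF assms] False by (subst Max_le_iff) auto
    then show ?thesis unfolding cc_def using False by simp
  qed
qed

end
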